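(* Every odd wheel is cycle-extendable.
   Context: An odd wheel is obtained from an odd cycle $u_0u_1\cdots u_{2k}u_0$ ($k\ge1$) by adding a new vertex $h$ and the edges $hu_i$ for all $i$. A matching covered graph (connected, at least two vertices, every edge in a perfect matching) is cycle-extendable if for every even cycle $C$ the graph $G-V(C)$ has a perfect matching. *)

theory Defs
  imports Main
begin

definition simple_graph :: "'a set \<Rightarrow> 'a set set \<Rightarrow> bool" where
  "simple_graph V E \<longleftrightarrow> finite V \<and> (\<forall>e\<in>E. \<exists>x y. x \<noteq> y \<and> x \<in> V \<and> y \<in> V \<and> e = {x, y})"

definition perfect_matching :: "'a set \<Rightarrow> 'a set set \<Rightarrow> 'a set set \<Rightarrow> bool" where
  "perfect_matching V E M \<longleftrightarrow> M \<subseteq> E \<and> (\<forall>v\<in>V. \<exists>!e. e \<in> M \<and> v \<in> e)"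

definition has_perfect_matching :: "'a set \<Rightarrow> 'a set set \<Rightarrow> bool" where
  "has_perfect_matching V E \<longleftrightarrow> (\<exists>M. perfect_matching V E M)"

definition del_verts_V :: "'a set \<Rightarrow> 'a set \<Rightarrow> 'a set" where
  "del_verts_V V S = V - S"

definition del_verts_E :: "'a set set \<Rightarrow> 'a set \<Rightarrow> 'a set set" where
  "del_verts_E E S = {e \<in> E. e \<inter> S = {}}"

definition connected_graph :: "'a set \<Rightarrow> 'a set set \<Rightarrow> bool" where
  "connected_graph V E \<longleftrightarrow> (\<forall>x\<in>V. \<forall>y\<in>V. (\<lambda>a b. {a, b} \<in> E)\<^sup>*\<^sup>* x y)"

definition matching_covered :: "'a set \<Rightarrow> 'a set set \<Rightarrow> bool" where
  "matching_covered V E \<longleftrightarrow> simple_graph V E \<and> connected_graph V E \<and> card V \<ge> 2 \<and>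
     (\<forall>e\<in>E. \<exists>M. perfect_matching V E M \<and> e \<in> M)"

definition is_cycle :: "'a set set \<Rightarrow> 'a list \<Rightarrow> bool" where
  "is_cycle E vs \<longleftrightarrow> length vs \<ge> 3 \<and> distinct vs \<and>
     (\<forall>i < length vs. {vs ! i, vs ! ((i + 1) mod length vs)} \<in> E)"

definition cycle_extendable :: "'a set \<Rightarrow> 'a set set \<Rightarrow> bool" where
  "cycle_extendable V E \<longleftrightarrow> matching_covered V E \<and>
     (\<forall>vs. is_cycle E vs \<and> even (length vs) \<longrightarrow>
        has_perfect_matching (del_verts_V V (set vs)) (del_verts_E E (set vs)))"

text \<open>Odd wheel: rim cycle u_0 ... u_{2k} (k \<ge> 1) plus hub h adjacent to all u_i.\<close>
definition odd_wheel :: "'a set \<Rightarrow> 'a set set \<Rightarrow> bool" where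
  "odd_wheel V E \<longleftrightarrow> (\<exists>k::nat. k \<ge> 1 \<and> (\<exists>h u.
     inj_on u {0..2*k} \<and> h \<notin> u ` {0..2*k} \<and>
     V = insert h (u ` {0..2*k}) \<and>
     E = {{u i, u ((i + 1) mod (2*k+1))} | i. i \<le> 2*k} \<union> {{h, u i} | i. i \<le> 2*k}))"

end

theory Submission
  imports Defs
begin

lemma ex1_insert_new: "(\<exists>!e. e \<in> A \<and> v \<in> e) \<Longrightarrow> v \<notin> x \<Longrightarrow> \<exists>!e. e \<in> insert x A \<and> v \<in> e"
  by blast

lemma ex1_insert_old: "v \<in> x \<Longrightarrow> \<forall>e\<in>A. v \<notin> e \<Longrightarrow> \<exists>!e. e \<in> insert x A \<and> v \<in> e"
  by blast

locale wheel =
  fixes n :: int and U :: "int \<Rightarrow> 'a" and h :: 'a and V :: "'a set" and E :: "'a set set"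
  assumes n3: "n \<ge> 3" and nodd: "odd n"
  and Ueq0: "\<And>i j. U i = U j \<longleftrightarrow> i mod n = j mod n"
  and hU: "\<And>i. h \<noteq> U i"
  and Vdef: "V = insert h (range U)"
  and Edef: "E = {{U i, U (i+1)} | i. True} \<union> {{h, U i} | i. True}"
begin

lemma Ueq: "U i = U j \<longleftrightarrow> n dvd (i - j)"
  using Ueq0 mod_eq_dvd_iff by blast

lemma rim_edge: "{U i, U j} \<in> E \<longleftrightarrow> n dvd (j - i - 1) \<or> n dvd (i - j - 1)"
proof
  assume "{U i, U j} \<in> E"
  then obtain a where a: "{U i, U j} = {U a, U (a+1)} \<or> {U i, U j} = {h, U a}"
    unfolding Edef by blast
  have "{U i, U j} \<noteq> {h, U a}"
  proof
    assume "{U i, U j} = {h, U a}"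
    then have "h \<in> {U i, U j}" by blast
    then show False using hU[of i] hU[of j] by blast
  qed
  with a have "{U i, U j} = {U a, U (a+1)}" by blast
  then have "(U i = U a \<and> U j = U (a+1)) \<or> (U i = U (a+1) \<and> U j = U a)"
    by (simp add: doubleton_eq_iff)
  then have "(n dvd (i - a) \<and> n dvd (j - (a+1))) \<or> (n dvd (i - (a+1)) \<and> n dvd (j - a))"
    unfolding Ueq by blast
  then show "n dvd (j - i - 1) \<or> n dvd (i - j - 1)"
  proof
    assume "n dvd (i - a) \<and> n dvd (j - (a+1))"
    then have "n dvd (j - (a+1) - (i - a))" by (meson dvd_diff)
    moreover have "j - (a+1) - (i - a) = j - i - 1" by simp
    ultimately show ?thesis by simp
  next
    assume "n dvd (i - (a+1)) \<and> n dvd (j - a)"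
    then have "n dvd (i - (a+1) - (j - a))" by (meson dvd_diff)
    moreover have "i - (a+1) - (j - a) = i - j - 1" by simp
    ultimately show ?thesis by simp
  qed
next
  assume "n dvd (j - i - 1) \<or> n dvd (i - j - 1)"
  then show "{U i, U j} \<in> E"
  proof
    assume "n dvd (j - i - 1)"
    moreover have "j - (i+1) = j - i - 1" by simp
    ultimately have "n dvd j - (i+1)" by metis
    then have "U j = U (i+1)" unfolding Ueq .
    then have "{U i, U j} = {U i, U (i+1)}" by simp
    then show ?thesis unfolding Edef by blast
  next
    assume "n dvd (i - j - 1)"
    moreover have "i - (j+1) = i - j - 1" by simp
    ultimately have "n dvd i - (j+1)" by metis
    then have "U i = U (j+1)" unfolding Ueq .
    then have "{U i, U j} = {U j, U (j+1)}" by auto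
    then show ?thesis unfolding Edef by blast
  qed
qed

lemma h_edge: "{h, U i} \<in> E" "{U i, h} \<in> E"
  unfolding Edef by (blast, auto simp: insert_commute)

lemma E_sub: "e \<in> E \<Longrightarrow> e \<subseteq> V"
  unfolding Edef Vdef by auto

lemma arc_dvd: assumes "s = 1 \<or> s = -1"
  shows "U (c + s*t) = U (c + s*t') \<longleftrightarrow> n dvd (t - t')"
proof -
  have e: "c + s*t - (c + s*t') = s * (t - t')" by (simp add: right_diff_distrib)
  have "n dvd s * (t - t') \<longleftrightarrow> n dvd (t - t')"
  proof (cases "s = 1")
    case True then show ?thesis by simp
  next
    case False
    then have "s * (t - t') = - (t - t')" using assms by simp
    then show ?thesis by (simp only: dvd_minus_iff)
  qed
  then show ?thesis unfolding Ueq e .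
qed

lemma arc_inj: assumes "s = 1 \<or> s = -1" "0 \<le> t" "t < n" "0 \<le> t'" "t' < n"
  and "U (c + s*t) = U (c + s*t')" shows "t = t'"
proof -
  have "n dvd (t - t')" using arc_dvd assms by blast
  have "\<bar>t - t'\<bar> < n" using assms by linarith
  show ?thesis
  proof (rule ccontr)
    assume "t \<noteq> t'"
    then have "t - t' \<noteq> 0" by simp
    from dvd_imp_le_int[OF this \<open>n dvd (t - t')\<close>] have "\<bar>n\<bar> \<le> \<bar>t - t'\<bar>" .
    with \<open>\<bar>t - t'\<bar> < n\<close> show False by simp
  qed
qed

lemma arc_cover: assumes "s = 1 \<or> s = -1"
  shows "\<exists>t. 0 \<le> t \<and> t < n \<and> U i = U (c + s*t)"
proof -
  define q where "q = (s*(i-c)) div n"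
  define t where "t = (s*(i-c)) mod n"
  have "0 \<le> t" "t < n" using n3 by (auto simp: t_def)
  moreover have "n dvd (i - (c + s*t))"
  proof -
    have tq: "t = s*(i-c) - n * q" unfolding t_def q_def by (simp add: minus_div_mult_eq_mod[symmetric])
    have "i - (c + s*t) = s * n * q"
      using assms
    proof
      assume "s = 1" then show ?thesis unfolding tq by simp
    next
      assume "s = -1" then show ?thesis unfolding tq by simp
    qed
    then show ?thesis by simp
  qed
  ultimately show ?thesis unfolding Ueq by blast
qed

lemma path:
  fixes g :: "nat \<Rightarrow> 'a"
  assumes m2: "2 \<le> mm" and rim: "\<forall>t<mm. g t \<in> range U" and inj: "inj_on g {..<mm}"
   and adj: "\<forall>t. Suc t < mm \<longrightarrow> {g t, g (Suc t)} \<in> E"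
  shows "\<exists>c s. (s = 1 \<or> s = -1) \<and> (\<forall>t<mm. g t = U (c + s * int t))"
proof -
  obtain c where c: "g 0 = U c" using rim m2 by fastforce
  have "Suc 0 < mm" using m2 by simp
  then obtain d where d: "g (Suc 0) = U d" using rim by blast
  have "{g 0, g (Suc 0)} \<in> E" using adj m2 by simp
  then have "{U c, U d} \<in> E" using c d by simp
  then have dd: "n dvd (d - c - 1) \<or> n dvd (c - d - 1)" using rim_edge by blast
  obtain s where s: "s = 1 \<or> s = -1" and g1: "g (Suc 0) = U (c + s)"
  proof (cases "n dvd (d - c - 1)")
    case True
    have "d - (c + 1) = d - c - 1" by simp
    with True have "n dvd d - (c + 1)" by metis
    then have "g (Suc 0) = U (c + 1)" using d Ueq by metis
    then show ?thesis using that by blast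
  next
    case False
    with dd have "n dvd (c - d - 1)" by blast
    moreover have "d - (c + -1) = - (c - d - 1)" by simp
    ultimately have "n dvd d - (c + -1)" by (metis dvd_minus_iff)
    then have "g (Suc 0) = U (c + -1)" using d Ueq by metis
    then show ?thesis using that by blast
  qed
  have step: "Suc t < mm \<Longrightarrow> g t = U (c + s*int t) \<and> g (Suc t) = U (c + s*int (Suc t))" for t
  proof (induction t)
    case 0 then show ?case using c g1 by simp
  next
    case (Suc t)
    then have IH: "g t = U (c + s*int t)" "g (Suc t) = U (c + s * int (Suc t))" by simp_all
    have lt: "Suc (Suc t) < mm" by fact
    obtain e where e: "g (Suc (Suc t)) = U e" using rim lt by blast
    have "{g (Suc t), g (Suc (Suc t))} \<in> E" using adj lt by blast
    then have "{U (c + s*int (Suc t)), U e} \<in> E" using IH e by simp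
    then have dv: "n dvd (e - (c + s*int (Suc t)) - 1) \<or> n dvd ((c + s*int (Suc t)) - e - 1)"
      using rim_edge by blast
    have "n dvd (e - (c + s*int (Suc (Suc t)))) \<or> n dvd (e - (c + s*int t))"
      using s
    proof
      assume s1: "s = 1"
      have "e - (c + s*int (Suc (Suc t))) = e - (c + s*int (Suc t)) - 1" using s1 by simp
      moreover have "e - (c + s*int t) = - ((c + s*int (Suc t)) - e - 1)" using s1 by simp
      ultimately show ?thesis using dv by (metis dvd_minus_iff)
    next
      assume s1: "s = -1"
      have "e - (c + s*int t) = e - (c + s*int (Suc t)) - 1" using s1 by simp
      moreover have "e - (c + s*int (Suc (Suc t))) = - ((c + s*int (Suc t)) - e - 1)" using s1 by simp
      ultimately show ?thesis using dv by (metis dvd_minus_iff)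
    qed
    then have "U e = U (c + s*int (Suc (Suc t))) \<or> U e = U (c + s*int t)" unfolding Ueq .
    moreover have "U e \<noteq> U (c + s*int t)"
    proof
      assume "U e = U (c + s*int t)"
      then have "g (Suc (Suc t)) = g t" using e IH by simp
      moreover have "Suc (Suc t) \<in> {..<mm}" "t \<in> {..<mm}" using lt by auto
      ultimately have "Suc (Suc t) = t" using inj by (meson inj_onD)
      then show False by simp
    qed
    ultimately show ?case using IH e by simp
  qed
  show ?thesis
  proof (intro exI conjI allI impI)
    show "s = 1 \<or> s = -1" by (rule s)
    fix t assume "t < mm"
    show "g t = U (c + s*int t)"
    proof (cases t)
      case 0 then show ?thesis using c by simp
    next
      case (Suc t') then show ?thesis using step[of t'] \<open>t<mm\<close> by simp
    qed
  qed
qed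

definition AM :: "int \<Rightarrow> int \<Rightarrow> int \<Rightarrow> 'a set set" where
  "AM c s m = {{U (c + s*(m + 2*j)), U (c + s*(m + 2*j + 1))} | j. 0 \<le> j \<and> m + 2*j + 1 < n}"

definition arcset :: "int \<Rightarrow> int \<Rightarrow> int \<Rightarrow> 'a set" where
  "arcset c s m = {U (c + s*t) | t. m \<le> t \<and> t < n}"

lemma AM_E: assumes "s = 1 \<or> s = -1" shows "AM c s m \<subseteq> E"
proof
  fix e assume "e \<in> AM c s m"
  then obtain j where e: "e = {U (c + s*(m + 2*j)), U (c + s*(m + 2*j + 1))}"
    unfolding AM_def by blast
  define x where "x = c + s*(m + 2*j)"
  have y: "c + s*(m + 2*j + 1) = x + s" unfolding x_def by (simp add: distrib_left)
  have "n dvd ((x + s) - x - 1) \<or> n dvd (x - (x + s) - 1)" using assms by auto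
  then have "{U x, U (x + s)} \<in> E" using rim_edge by blast
  then show "e \<in> E" using e y x_def by simp
qed

lemma arcsetI: "m \<le> t \<Longrightarrow> t < n \<Longrightarrow> U (c + s*t) \<in> arcset c s m"
  unfolding arcset_def by blast

lemma AM_sub: assumes "0 \<le> m" "e \<in> AM c s m" shows "e \<subseteq> arcset c s m"
proof -
  obtain j where e: "e = {U (c + s*(m + 2*j)), U (c + s*(m + 2*j + 1))}" "0 \<le> j" "m + 2*j + 1 < n"
    using assms(2) unfolding AM_def by blast
  have "U (c + s*(m + 2*j)) \<in> arcset c s m" using e by (intro arcsetI) linarith+
  moreover have "U (c + s*(m + 2*j + 1)) \<in> arcset c s m" using e by (intro arcsetI) linarith+
  ultimately show ?thesis using e(1) by blast
qed

lemma h_notin_AM: assumes "e \<in> AM c s m" shows "h \<notin> e"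
  using assms hU unfolding AM_def by auto

lemma notin_AM: assumes "s = 1 \<or> s = -1" "0 \<le> t" "t < m" "e \<in> AM c s m"
  shows "U (c + s*t) \<notin> e"
proof
  assume a: "U (c + s*t) \<in> e"
  obtain j where e: "e = {U (c + s*(m + 2*j)), U (c + s*(m + 2*j + 1))}" "0 \<le> j" "m + 2*j + 1 < n"
    using assms(4) unfolding AM_def by blast
  from a e(1) have "U (c + s*t) = U (c + s*(m + 2*j)) \<or> U (c + s*t) = U (c + s*(m + 2*j + 1))" by blast
  then show False
  proof
    assume "U (c + s*t) = U (c + s*(m + 2*j))"
    moreover have "0 \<le> t" "t < n" "0 \<le> m + 2*j" "m + 2*j < n" using assms e by linarith+
    ultimately have "t = m + 2*j" using arc_inj[OF assms(1)] by blast
    then show False using assms e by linarith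
  next
    assume "U (c + s*t) = U (c + s*(m + 2*j + 1))"
    moreover have "0 \<le> t" "t < n" "0 \<le> m + 2*j + 1" "m + 2*j + 1 < n" using assms e by linarith+
    ultimately have "t = m + 2*j + 1" using arc_inj[OF assms(1)] by blast
    then show False using assms e by linarith
  qed
qed

lemma AM_cover: assumes s: "s = 1 \<or> s = -1" and m0: "0 \<le> m" and ev: "even (n - m)"
  and t: "m \<le> t" "t < n"
  shows "\<exists>!e. e \<in> AM c s m \<and> U (c + s*t) \<in> e"
proof -
  define j0 where "j0 = (t - m) div 2"
  have j0: "0 \<le> j0" "m + 2*j0 + 1 < n" "t = m + 2*j0 \<or> t = m + 2*j0 + 1"
    using t ev unfolding j0_def by presburger+
  define e0 where "e0 = {U (c + s*(m + 2*j0)), U (c + s*(m + 2*j0 + 1))}"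
  show ?thesis
  proof (rule ex1I[of _ e0])
    show "e0 \<in> AM c s m \<and> U (c + s*t) \<in> e0"
      using j0 unfolding e0_def AM_def by auto
  next
    fix e assume a: "e \<in> AM c s m \<and> U (c + s*t) \<in> e"
    obtain j where e: "e = {U (c + s*(m + 2*j)), U (c + s*(m + 2*j + 1))}" "0 \<le> j" "m + 2*j + 1 < n"
      using a unfolding AM_def by blast
    have r: "0 \<le> t" "0 \<le> m + 2*j" "m + 2*j < n" "0 \<le> m + 2*j + 1" using e m0 t by linarith+
    from a e(1) have "U (c + s*t) = U (c + s*(m + 2*j)) \<or> U (c + s*t) = U (c + s*(m + 2*j + 1))" by blast
    then have "t = m + 2*j \<or> t = m + 2*j + 1"
      using arc_inj[OF s] r t e(3) by blast
    then have "j = j0" unfolding j0_def by presburger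
    then show "e = e0" using e(1) e0_def by simp
  qed
qed

lemma rangeU: "range U = U ` {0..<n}"
proof
  show "range U \<subseteq> U ` {0..<n}"
  proof
    fix v assume "v \<in> range U"
    then obtain i where "v = U i" by blast
    moreover have "U i = U (i mod n)" using Ueq0 by simp
    moreover have "i mod n \<in> {0..<n}" using n3 by simp
    ultimately show "v \<in> U ` {0..<n}" by blast
  qed
qed blast

lemma finV: "finite V"
  unfolding Vdef using rangeU by simp

lemma U_ne_succ: "U a \<noteq> U (a + 1)"
proof
  assume "U a = U (a + 1)"
  then have "n dvd (a - (a + 1))" using Ueq by blast
  then have "n dvd 1" by simp
  then show False using n3 by (simp add: zdvd_imp_le) 
qed

lemma simple: "simple_graph V E"
  unfolding simple_graph_def
proof (intro conjI ballI)
  show "finite V" by (rule finV)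
  fix e assume "e \<in> E"
  then obtain a where "e = {U a, U (a+1)} \<or> e = {h, U a}" unfolding Edef by blast
  then show "\<exists>x y. x \<noteq> y \<and> x \<in> V \<and> y \<in> V \<and> e = {x, y}"
    using U_ne_succ hU unfolding Vdef by blast
qed

lemma conn: "connected_graph V E"
  unfolding connected_graph_def
proof (intro ballI)
  have toh: "(\<lambda>a b. {a, b} \<in> E)\<^sup>*\<^sup>* x h" if "x \<in> V" for x
  proof -
    from that have "x = h \<or> (\<exists>i. x = U i)" unfolding Vdef by blast
    then show ?thesis
    proof
      assume "\<exists>i. x = U i"
      then obtain i where "x = U i" by blast
      then have "{x, h} \<in> E" using h_edge by simp
      then show ?thesis by blast
    qed simp
  qed
  have fromh: "(\<lambda>a b. {a, b} \<in> E)\<^sup>*\<^sup>* h y" if "y \<in> V" for y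
  proof -
    from that have "y = h \<or> (\<exists>i. y = U i)" unfolding Vdef by blast
    then show ?thesis
    proof
      assume "\<exists>i. y = U i"
      then obtain i where "y = U i" by blast
      then have "{h, y} \<in> E" using h_edge by simp
      then show ?thesis by blast
    qed simp
  qed
  fix x y assume "x \<in> V" "y \<in> V"
  then show "(\<lambda>a b. {a, b} \<in> E)\<^sup>*\<^sup>* x y" using toh fromh by (meson rtranclp_trans)
qed

lemma card2: "2 \<le> card V"
proof -
  have "{h, U 0} \<subseteq> V" unfolding Vdef by blast
  moreover have "card {h, U 0} = 2" using hU[of 0] by simp
  ultimately show ?thesis using finV by (metis card_mono)
qed

lemma V_cases: assumes "v \<in> V" "s = 1 \<or> s = -1"
  shows "v = h \<or> (\<exists>t. 0 \<le> t \<and> t < n \<and> v = U (c + s*t))"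
  using assms arc_cover unfolding Vdef by blast

lemma arc_inj1: assumes "0 \<le> t" "t < n" "0 \<le> t'" "t' < n" "U (c + t) = U (c + t')"
  shows "t = t'"
  using arc_inj[of 1 t t' c] assms by simp

lemma pm1: "\<exists>M. perfect_matching V E M \<and> {h, U a} \<in> M"
proof -
  define M where "M = insert {h, U a} (AM a 1 1)"
  have ev: "even (n - 1)" using nodd by simp
  have "M \<subseteq> E" unfolding M_def using h_edge AM_E[of 1 a 1] by simp
  moreover have "\<exists>!e. e \<in> M \<and> v \<in> e" if v: "v \<in> V" for v
  proof -
    from V_cases[OF v, of 1 a] have "v = h \<or> (\<exists>t. 0 \<le> t \<and> t < n \<and> v = U (a + t))" by simp
    then show ?thesis
    proof
      assume vh: "v = h"
      have "\<forall>e\<in>AM a 1 1. v \<notin> e" using h_notin_AM vh by blast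
      moreover have "v \<in> {h, U a}" using vh by simp
      ultimately show ?thesis unfolding M_def by (rule ex1_insert_old[rotated])
    next
      assume "\<exists>t. 0 \<le> t \<and> t < n \<and> v = U (a + t)"
      then obtain t where t: "0 \<le> t" "t < n" "v = U (a + t)" by blast
      show ?thesis
      proof (cases "t = 0")
        case True
        then have vU: "v = U (a + 1*0)" using t by simp
        have "\<forall>e\<in>AM a 1 1. v \<notin> e" using notin_AM[of 1 0 1 _ a] vU by simp
        moreover have "v \<in> {h, U a}" using vU by simp
        ultimately show ?thesis unfolding M_def by (rule ex1_insert_old[rotated])
      next
        case False
        have "v \<noteq> U (a + 0)"
        proof
          assume "v = U (a + 0)"
          then have "t = 0" using arc_inj1[of t 0 a] t n3 by simp
          then show False using False by simp
        qed
        then have "v \<notin> {h, U a}" using hU t by auto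
        moreover have "\<exists>!e. e \<in> AM a 1 1 \<and> v \<in> e"
          using AM_cover[of 1 1 t a] ev t False by simp
        ultimately show ?thesis unfolding M_def by (intro ex1_insert_new)
      qed
    qed
  qed
  ultimately have "perfect_matching V E M" unfolding perfect_matching_def by (intro conjI ballI)
  moreover have "{h, U a} \<in> M" unfolding M_def by simp
  ultimately show ?thesis by (intro exI[of _ M] conjI)
qed

lemma pm2: "\<exists>M. perfect_matching V E M \<and> {U a, U (a+1)} \<in> M"
proof -
  define M where "M = insert {U a, U (a+1)} (insert {h, U (a+2)} (AM a 1 3))"
  have ev: "even (n - 3)" using nodd by simp
  have e1: "{U a, U (a+1)} \<in> E" unfolding Edef by blast
  have "M \<subseteq> E" unfolding M_def using e1 h_edge AM_E[of 1 a 3] by simp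
  moreover have "\<exists>!e. e \<in> M \<and> v \<in> e" if v: "v \<in> V" for v
  proof -
    from V_cases[OF v, of 1 a] have "v = h \<or> (\<exists>t. 0 \<le> t \<and> t < n \<and> v = U (a + 1*t))" by simp
    then show ?thesis
    proof
      assume vh: "v = h"
      have "\<forall>e\<in>AM a 1 3. v \<notin> e" using h_notin_AM vh by blast
      moreover have "v \<in> {h, U (a+2)}" using vh by simp
      ultimately have A: "\<exists>!e. e \<in> insert {h, U (a+2)} (AM a 1 3) \<and> v \<in> e"
        by (rule ex1_insert_old[rotated])
      have n1: "v \<notin> {U a, U (a+1)}" using vh hU by auto
      show ?thesis unfolding M_def by (rule ex1_insert_new[OF A n1])
    next
      assume "\<exists>t. 0 \<le> t \<and> t < n \<and> v = U (a + 1*t)"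
      then obtain t where t: "0 \<le> t" "t < n" "v = U (a + 1*t)" by blast
      have ne: "v \<noteq> U (a + 1*k)" if "0 \<le> k" "k < n" "k \<noteq> t" for k
      proof
        assume "v = U (a + 1*k)"
        then have "t = k" using arc_inj1[of t k a] t that by simp
        then show False using that by simp
      qed
      have vnh: "v \<noteq> h" using t hU by metis
      consider "t = 0 \<or> t = 1" | "t = 2" | "3 \<le> t" using t by linarith
      then show ?thesis
      proof cases
        case 1
        have "v \<notin> {h, U (a+2)}" using vnh ne[of 2] n3 1 by auto
        moreover have "\<forall>e\<in>AM a 1 3. v \<notin> e" using notin_AM[of 1 t 3 _ a] t 1 by auto
        ultimately have "\<forall>e\<in>insert {h, U (a+2)} (AM a 1 3). v \<notin> e" by blast
        moreover have "v \<in> {U a, U (a+1)}" using t 1 by auto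
        ultimately show ?thesis unfolding M_def by (rule ex1_insert_old[rotated])
      next
        case 2
        have n1: "v \<notin> {U a, U (a+1)}" using ne[of 0] ne[of 1] n3 2 by auto
        have "\<forall>e\<in>AM a 1 3. v \<notin> e" using notin_AM[of 1 t 3 _ a] t 2 by auto
        moreover have "v \<in> {h, U (a+2)}" using t 2 by auto
        ultimately have A: "\<exists>!e. e \<in> insert {h, U (a+2)} (AM a 1 3) \<and> v \<in> e"
          by (intro ex1_insert_old)
        show ?thesis unfolding M_def by (rule ex1_insert_new[OF A n1])
      next
        case 3
        have n1: "v \<notin> {U a, U (a+1)}" using ne[of 0] ne[of 1] n3 3 by auto
        have n2: "v \<notin> {h, U (a+2)}" using vnh ne[of 2] n3 3 by auto
        have A: "\<exists>!e. e \<in> AM a 1 3 \<and> v \<in> e"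
          using AM_cover[of 1 3 t a] ev t 3 by simp
        show ?thesis unfolding M_def by (rule ex1_insert_new[OF ex1_insert_new[OF A n2] n1])
      qed
    qed
  qed
  ultimately have "perfect_matching V E M" unfolding perfect_matching_def by (intro conjI ballI)
  moreover have "{U a, U (a+1)} \<in> M" unfolding M_def by simp
  ultimately show ?thesis by (intro exI[of _ M] conjI)
qed

lemma matching_cov: "matching_covered V E"
  unfolding matching_covered_def
proof (intro conjI ballI)
  show "simple_graph V E" by (rule simple)
  show "connected_graph V E" by (rule conn)
  show "2 \<le> card V" by (rule card2)
  fix e assume "e \<in> E"
  then obtain a where "e = {U a, U (a+1)} \<or> e = {h, U a}" unfolding Edef by blast
  then show "\<exists>M. perfect_matching V E M \<and> e \<in> M" using pm1 pm2 by blast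
qed

lemma finish: assumes s: "s = 1 \<or> s = -1" and m0: "0 \<le> m" and ev: "even (n - m)"
  and VS: "V - S = arcset c s m"
  shows "has_perfect_matching (V - S) {e \<in> E. e \<inter> S = {}}"
  unfolding has_perfect_matching_def perfect_matching_def
proof (intro exI[of _ "AM c s m"] conjI ballI)
  show "AM c s m \<subseteq> {e \<in> E. e \<inter> S = {}}"
  proof
    fix e assume e: "e \<in> AM c s m"
    then have "e \<in> E" using AM_E[OF s] by blast
    moreover have "e \<subseteq> V - S" using AM_sub[OF m0 e] VS by simp
    ultimately show "e \<in> {e \<in> E. e \<inter> S = {}}" by blast
  qed
  fix v assume "v \<in> V - S"
  then have "v \<in> arcset c s m" using VS by simp
  then obtain t where t: "m \<le> t" "t < n" "v = U (c + s*t)" unfolding arcset_def by blast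
  show "\<exists>!e. e \<in> AM c s m \<and> v \<in> e" using AM_cover[OF s m0 ev t(1,2)] t(3) by simp
qed

lemma cyc: assumes cy: "is_cycle E vs" and evl: "even (length vs)"
  shows "has_perfect_matching (V - set vs) {e \<in> E. e \<inter> set vs = {}}"
proof -
  define L where "L = length vs"
  have L3: "3 \<le> L" and dist: "distinct vs"
    and adj: "\<forall>i<L. {vs ! i, vs ! ((i + 1) mod L)} \<in> E"
    using cy unfolding is_cycle_def L_def by auto
  have inV: "vs ! i \<in> V" if "i < L" for i
    using adj that E_sub by blast
  show ?thesis
  proof (cases "h \<in> set vs")
    case True
    then obtain p where p: "p < L" "vs ! p = h" unfolding L_def by (auto simp: in_set_conv_nth)
    define ws where "ws = rotate p vs"
    have lws: "length ws = L" unfolding ws_def L_def by simp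
    have sws: "set ws = set vs" unfolding ws_def by simp
    have dws: "distinct ws" unfolding ws_def using dist by simp
    have wsn: "ws ! i = vs ! ((p + i) mod L)" if "i < L" for i
      unfolding ws_def L_def using that L_def nth_rotate by simp
    have ws0: "ws ! 0 = h" using wsn[of 0] L3 p by simp
    have wsadj: "{ws ! i, ws ! Suc i} \<in> E" if "Suc i < L" for i
    proof -
      have "ws ! Suc i = vs ! ((p + Suc i) mod L)" using wsn that by simp
      also have "(p + Suc i) mod L = ((p + i) mod L + 1) mod L" by (simp add: mod_Suc_eq)
      finally have "ws ! Suc i = vs ! (((p + i) mod L + 1) mod L)" .
      moreover have "ws ! i = vs ! ((p + i) mod L)" using wsn that by simp
      moreover have "(p + i) mod L < L" using L3 by simp
      ultimately show ?thesis using adj by simp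
    qed
    define mm where "mm = L - 1"
    define g where "g t = ws ! Suc t" for t
    have wsV: "ws ! i \<in> V" if "i < L" for i
    proof -
      have "set vs \<subseteq> V" using inV by (auto simp: in_set_conv_nth L_def)
      then show ?thesis using that sws lws nth_mem by blast
    qed
    have wsne: "ws ! Suc t \<noteq> h" if "t < mm" for t
    proof
      assume "ws ! Suc t = h"
      then have "ws ! Suc t = ws ! 0" using ws0 by simp
      moreover have "Suc t < length ws" "0 < length ws" using that mm_def lws by auto
      ultimately have "Suc t = 0" using nth_eq_iff_index_eq[OF dws] by blast
      then show False by simp
    qed
    have rim: "\<forall>t<mm. g t \<in> range U"
    proof (intro allI impI)
      fix t assume "t < mm"
      then have "ws ! Suc t \<in> V" "ws ! Suc t \<noteq> h" using wsV wsne mm_def by auto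
      then show "g t \<in> range U" unfolding g_def Vdef by blast
    qed
    have ginj: "inj_on g {..<mm}"
    proof (rule inj_onI)
      fix x y assume "x \<in> {..<mm}" "y \<in> {..<mm}" "g x = g y"
      then have "Suc x < L" "Suc y < L" "ws ! Suc x = ws ! Suc y" unfolding g_def mm_def by auto
      then show "x = y" using nth_eq_iff_index_eq[OF dws] lws by simp
    qed
    have gadj: "\<forall>t. Suc t < mm \<longrightarrow> {g t, g (Suc t)} \<in> E"
      unfolding g_def mm_def using wsadj by simp
    have m2: "2 \<le> mm" using L3 mm_def by simp
    obtain c s where s: "s = 1 \<or> s = -1" and gU: "\<forall>t<mm. g t = U (c + s * int t)"
      using path[OF m2 rim ginj gadj] by blast
    have mmn: "int mm \<le> n"
    proof (rule ccontr)
      assume "\<not> int mm \<le> n"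
      then have nl: "nat n < mm" using n3 by linarith
      have "g (nat n) = U (c + s * n)" using gU nl n3 by simp
      also have "\<dots> = U (c + s * 0)" using arc_dvd[OF s, of c n 0] by simp
      also have "\<dots> = g 0" using gU m2 by simp
      finally have geq: "g (nat n) = g 0" .
      have "nat n = 0" using inj_onD[OF ginj geq] nl m2 by simp
      then show False using n3 by simp
    qed
    have setvs: "set vs = insert h {U (c + s*t) | t. 0 \<le> t \<and> t < int mm}"
    proof
      show "set vs \<subseteq> insert h {U (c + s*t) | t. 0 \<le> t \<and> t < int mm}"
      proof
        fix v assume "v \<in> set vs"
        then obtain i where i: "i < L" "ws ! i = v" using sws lws by (metis in_set_conv_nth)
        show "v \<in> insert h {U (c + s*t) | t. 0 \<le> t \<and> t < int mm}"
        proof (cases i)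
          case 0 then show ?thesis using i ws0 by simp
        next
          case (Suc t)
          then have "t < mm" "v = g t" using i mm_def g_def by auto
          then have "v = U (c + s * int t)" using gU by simp
          then show ?thesis using \<open>t < mm\<close> by force
        qed
      qed
      show "insert h {U (c + s*t) | t. 0 \<le> t \<and> t < int mm} \<subseteq> set vs"
      proof
        fix v assume "v \<in> insert h {U (c + s*t) | t. 0 \<le> t \<and> t < int mm}"
        then show "v \<in> set vs"
        proof
          assume "v = h" then show ?thesis using True by simp
        next
          assume "v \<in> {U (c + s*t) | t. 0 \<le> t \<and> t < int mm}"
          then obtain t where t: "0 \<le> t" "t < int mm" "v = U (c + s*t)" by blast
          then have "nat t < mm" by linarith
          then have "g (nat t) = v" using gU t by simp
          moreover have "Suc (nat t) < L" using \<open>nat t < mm\<close> mm_def by simp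
          ultimately show ?thesis unfolding g_def using sws lws by (metis nth_mem)
        qed
      qed
    qed
    have VS: "V - set vs = arcset c s (int mm)"
    proof
      show "V - set vs \<subseteq> arcset c s (int mm)"
      proof
        fix v assume v: "v \<in> V - set vs"
        then have "v \<noteq> h" using True by blast
        then have "v \<in> range U" using v Vdef by blast
        then obtain i where "v = U i" by blast
        then obtain t where t: "0 \<le> t" "t < n" "v = U (c + s*t)" using arc_cover[OF s] by blast
        have "\<not> t < int mm"
        proof
          assume "t < int mm"
          then have "v \<in> set vs" using setvs t by blast
          then show False using v by blast
        qed
        then show "v \<in> arcset c s (int mm)" using t arcsetI by simp
      qed
      show "arcset c s (int mm) \<subseteq> V - set vs"
      proof
        fix v assume "v \<in> arcset c s (int mm)"
        then obtain t where t: "int mm \<le> t" "t < n" "v = U (c + s*t)" unfolding arcset_def by blast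
        have "v \<in> V" using t Vdef by blast
        moreover have "v \<notin> set vs"
        proof
          assume "v \<in> set vs"
          moreover have "v \<noteq> h" using t hU by metis
          ultimately obtain t' where t': "0 \<le> t'" "t' < int mm" "v = U (c + s*t')" using setvs by blast
          then have "t = t'" using arc_inj[OF s, of t t' c] t mmn by simp
          then show False using t t' by simp
        qed
        ultimately show "v \<in> V - set vs" by blast
      qed
    qed
    have "even (n - int mm)" using nodd evl L3 unfolding mm_def L_def by (simp add: of_nat_diff)
    then show ?thesis using finish[OF s _ _ VS] by simp
  next
    case False
    have rim: "\<forall>t<L. vs ! t \<in> range U"
      using inV False Vdef nth_mem L_def by (metis insertE)
    have ginj: "inj_on (\<lambda>t. vs ! t) {..<L}"
      unfolding inj_on_def using nth_eq_iff_index_eq[OF dist] L_def by auto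
    have gadj: "\<forall>t. Suc t < L \<longrightarrow> {vs ! t, vs ! Suc t} \<in> E"
      using adj by (metis Suc_eq_plus1 Suc_lessD mod_less)
    have m2: "2 \<le> L" using L3 by simp
    obtain c s where s: "s = 1 \<or> s = -1" and gU: "\<forall>t<L. vs ! t = U (c + s * int t)"
      using path[OF m2 rim ginj gadj] by blast
    have "{vs ! (L - 1), vs ! 0} \<in> E" using adj[rule_format, of "L - 1"] L3 by simp
    moreover have "vs ! (L - 1) = U (c + s * (int L - 1))" using gU L3 by (simp add: of_nat_diff)
    moreover have "vs ! 0 = U c" using gU L3 by simp
    ultimately have "{U (c + s * (int L - 1)), U c} \<in> E" by simp
    then have dd: "n dvd (c - (c + s * (int L - 1)) - 1) \<or> n dvd ((c + s * (int L - 1)) - c - 1)"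
      using rim_edge by blast
    have "n dvd int L \<or> n dvd (int L - 2)"
      using s
    proof
      assume s1: "s = 1"
      have "c - (c + s * (int L - 1)) - 1 = - int L" using s1 by simp
      moreover have "(c + s * (int L - 1)) - c - 1 = int L - 2" using s1 by simp
      ultimately show ?thesis using dd by (metis dvd_minus_iff)
    next
      assume s1: "s = -1"
      have "c - (c + s * (int L - 1)) - 1 = int L - 2" using s1 by simp
      moreover have "(c + s * (int L - 1)) - c - 1 = - int L" using s1 by simp
      ultimately show ?thesis using dd by (metis dvd_minus_iff)
    qed
    then have False
    proof
      assume "n dvd (int L - 2)"
      then have "U (c + s * int (L - 2)) = U (c + s * 0)" using arc_dvd[OF s, of c "int (L - 2)" 0] L3 by (simp add: of_nat_diff)
      then have "vs ! (L - 2) = vs ! 0" using gU L3 by simp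
      moreover have "L - 2 < length vs" "0 < length vs" using L3 L_def by auto
      ultimately have "L - 2 = 0" using nth_eq_iff_index_eq[OF dist] by blast
      then show False using L3 by simp
    next
      assume "n dvd int L"
      then have "n \<le> int L" using L3 by (simp add: zdvd_imp_le)
      moreover have "n \<noteq> int L" using nodd evl L_def by auto
      ultimately have nl: "nat n < L" using n3 by linarith
      have "U (c + s * n) = U (c + s * 0)" using arc_dvd[OF s, of c n 0] by simp
      then have "vs ! (nat n) = vs ! 0" using gU nl n3 L3 by simp
      moreover have "nat n < length vs" "0 < length vs" using nl L3 L_def by auto
      ultimately have "nat n = 0" using nth_eq_iff_index_eq[OF dist] by blast
      then show False using n3 by simp
    qed
    then show ?thesis by blast
  qed
qed

lemma cycle_ext: "cycle_extendable V E"
  unfolding cycle_extendable_def del_verts_V_def del_verts_E_def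
  using matching_cov cyc by blast

end
theorem proposition4p1:
  fixes V :: "'a set" and E :: "'a set set"
  assumes "odd_wheel V E"
  shows "cycle_extendable V E"
proof -
  obtain k :: nat and h u where k: "k \<ge> 1" and inj: "inj_on u {0..2*k}" and hn: "h \<notin> u ` {0..2*k}"
    and V: "V = insert h (u ` {0..2*k})"
    and E: "E = {{u i, u ((i + 1) mod (2*k+1))} | i. i \<le> 2*k} \<union> {{h, u i} | i. i \<le> 2*k}"
    using assms unfolding odd_wheel_def by blast
  define N where "N = 2*k+1"
  define n :: int where "n = int N"
  define U where "U i = u (nat (i mod n))" for i
  have npos: "n > 0" unfolding n_def N_def by simp
  have idx: "nat (i mod n) \<in> {0..2*k}" for i
  proof -
    have "i mod n < n" using npos by simp
    moreover have "n = 2 * int k + 1" by (simp add: n_def N_def)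
    ultimately have "i mod n \<le> int (2*k)" by linarith
    then show ?thesis by simp
  qed
  have Ueq0: "U i = U j \<longleftrightarrow> i mod n = j mod n" for i j
  proof
    assume "U i = U j"
    then have "nat (i mod n) = nat (j mod n)" unfolding U_def using inj_onD[OF inj _ idx idx] by blast
    moreover have "0 \<le> i mod n" "0 \<le> j mod n" using npos by simp_all
    ultimately show "i mod n = j mod n" by simp
  qed (simp add: U_def)
  have Uint: "U (int i) = u i" if "i \<le> 2*k" for i
  proof -
    have "int i mod n = int i" using that unfolding n_def N_def by simp
    then show ?thesis unfolding U_def by simp
  qed
  have Usucc: "U (int i + 1) = u ((i + 1) mod N)" for i
  proof -
    have "(int i + 1) mod n = int ((i + 1) mod N)" unfolding n_def by (simp add: of_nat_mod add.commute)
    then show ?thesis unfolding U_def by simp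
  qed
  have rng: "range U = u ` {0..2*k}"
  proof
    show "range U \<subseteq> u ` {0..2*k}" unfolding U_def using idx by blast
    show "u ` {0..2*k} \<subseteq> range U"
    proof
      fix v assume "v \<in> u ` {0..2*k}"
      then obtain i where "i \<le> 2*k" "v = u i" by auto
      then have "v = U (int i)" using Uint by simp
      then show "v \<in> range U" by blast
    qed
  qed
  have E1: "{{u i, u ((i + 1) mod (2*k+1))} | i. i \<le> 2*k} = {{U i, U (i+1)} | i. True}"
  proof
    show "{{u i, u ((i + 1) mod (2*k+1))} | i. i \<le> 2*k} \<subseteq> {{U i, U (i+1)} | i. True}"
    proof
      fix e assume "e \<in> {{u i, u ((i + 1) mod (2*k+1))} | i. i \<le> 2*k}"
      then obtain i where i: "i \<le> 2*k" "e = {u i, u ((i + 1) mod (2*k+1))}" by blast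
      then have "e = {U (int i), U (int i + 1)}" using Uint Usucc N_def by simp
      then show "e \<in> {{U i, U (i+1)} | i. True}" by blast
    qed
    show "{{U i, U (i+1)} | i. True} \<subseteq> {{u i, u ((i + 1) mod (2*k+1))} | i. i \<le> 2*k}"
    proof
      fix e assume "e \<in> {{U i, U (i+1)} | i. True}"
      then obtain a where a: "e = {U a, U (a+1)}" by blast
      define i where "i = nat (a mod n)"
      have i2: "i \<le> 2*k" using idx i_def by simp
      have ai: "int i = a mod n" unfolding i_def using npos by simp
      have "U a = u i" unfolding U_def i_def ..
      moreover have "U (a + 1) = U (int i + 1)"
        unfolding Ueq0 ai by (simp add: mod_add_left_eq)
      ultimately have "e = {u i, u ((i + 1) mod (2*k+1))}" using a Usucc N_def by simp
      then show "e \<in> {{u i, u ((i + 1) mod (2*k+1))} | i. i \<le> 2*k}" using i2 by blast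
    qed
  qed
  have E2: "{{h, u i} | i. i \<le> 2*k} = {{h, U i} | i. True}"
  proof
    show "{{h, u i} | i. i \<le> 2*k} \<subseteq> {{h, U i} | i. True}"
    proof
      fix e assume "e \<in> {{h, u i} | i. i \<le> 2*k}"
      then obtain i where "i \<le> 2*k" "e = {h, u i}" by blast
      then have "e = {h, U (int i)}" using Uint by simp
      then show "e \<in> {{h, U i} | i. True}" by blast
    qed
    show "{{h, U i} | i. True} \<subseteq> {{h, u i} | i. i \<le> 2*k}"
    proof
      fix e assume "e \<in> {{h, U i} | i. True}"
      then obtain a where "e = {h, U a}" by blast
      then have "e = {h, u (nat (a mod n))}" unfolding U_def .
      then show "e \<in> {{h, u i} | i. i \<le> 2*k}" using idx[of a] by auto
    qed
  qed
  interpret wheel n U h V E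
  proof
    show "3 \<le> n" using k unfolding n_def N_def by simp
    show "odd n" unfolding n_def N_def by simp
    show "U i = U j \<longleftrightarrow> i mod n = j mod n" for i j by (rule Ueq0)
    show "h \<noteq> U i" for i using hn rng by auto
    show "V = insert h (range U)" using V rng by simp
    show "E = {{U i, U (i+1)} | i. True} \<union> {{h, U i} | i. True}" using E E1 E2 by simp
  qed
  show ?thesis by (rule cycle_ext)
qed

end
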